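(* For all integers $a,b,c,d\in\mathbb Z$, if $a+b=c+d$ then $(\mathbb Z,+)\models a:b::c:d$.
   Context: $(\mathbb Z,+)$ is the structure with universe $\mathbb Z$ and one binary function symbol interpreted as addition. The analogical proportion relation: a c-formula is a conjunctive formula (built from atomic formulas using only $\wedge,\exists,\forall$; parameters from the universe allowed) with free variables exactly $x,y$ whose dependency graph (vertices: its variables; edge $\{w,z\}$ iff $w,z$ occur in a common atomic subformula) is connected. $\uparrow_{\mathfrak A}(a\to b)=\{\alpha:\mathfrak A\models\alpha(a,b)\}$, $\uparrow_{\mathfrak A}(a\to b:\cdot\, c\to d)=\uparrow_{\mathfrak A}(a\to b)\cap\uparrow_{\mathfrak A}(c\to d)$. A c-formula is trivial iff it is in $\uparrow_{\mathfrak A}(a\to b:\cdot\, c\to d)$ for all $a,b,c,d$; $\emptyset_{\mathfrak A}$ is the set of these. $\mathfrak A\models a\to b:\cdot\, c\to d$ iff either $\uparrow_{\mathfrak A}(a\to b)\cup\uparrow_{\mathfrak A}(c\to d)$ consists only of trivial formulas, or $\uparrow_{\mathfrak A}(a\to b:\cdot\, c\to d)$ contains a non-trivial formula and for every $d'$, $\emptyset_{\mathfrak A}\subsetneq\uparrow(a\to b:\cdot\, c\to d)\subseteq\uparrow(a\to b:\cdot\, c\to d')$ implies $\emptyset_{\mathfrak A}\subsetneq\uparrow(a\to b:\cdot\, c\to d')\subseteq\uparrow(a\to b:\cdot\, c\to d)$. $\mathfrak A\models a:b::c:d$ iff $\mathfrak A\models a\to b:\cdot\, c\to d$, $b\to a:\cdot\,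 d\to c$, $c\to d:\cdot\, a\to b$ and $d\to c:\cdot\, b\to a$. *)

theory Defs
  imports Main
begin

datatype 'a tm = Var nat | Par 'a | App "'a tm" "'a tm"
  (* Par: parameters (constants naming universe elements); App: the binary function symbol *)

datatype 'a fm = Eq "'a tm" "'a tm" | Conj "'a fm" "'a fm" | Ex nat "'a fm" | All nat "'a fm"

primrec tvars :: "'a tm \<Rightarrow> nat set" where
  "tvars (Var n) = {n}"
| "tvars (Par c) = {}"
| "tvars (App s t) = tvars s \<union> tvars t"

primrec tval :: "('a \<Rightarrow> 'a \<Rightarrow> 'a) \<Rightarrow> (nat \<Rightarrow> 'a) \<Rightarrow> 'a tm \<Rightarrow> 'a" where
  "tval f e (Var n) = e n"
| "tval f e (Par c) = c"
| "tval f e (App s t) = f (tval f e s) (tval f e t)"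

primrec sat :: "('a \<Rightarrow> 'a \<Rightarrow> 'a) \<Rightarrow> (nat \<Rightarrow> 'a) \<Rightarrow> 'a fm \<Rightarrow> bool" where
  "sat f e (Eq s t) = (tval f e s = tval f e t)"
| "sat f e (Conj p q) = (sat f e p \<and> sat f e q)"
| "sat f e (Ex n p) = (\<exists>v. sat f (e(n := v)) p)"
| "sat f e (All n p) = (\<forall>v. sat f (e(n := v)) p)"

primrec fvars :: "'a fm \<Rightarrow> nat set" where
  "fvars (Eq s t) = tvars s \<union> tvars t"
| "fvars (Conj p q) = fvars p \<union> fvars q"
| "fvars (Ex n p) = fvars p - {n}"
| "fvars (All n p) = fvars p - {n}"

primrec vars :: "'a fm \<Rightarrow> nat set" where
  "vars (Eq s t) = tvars s \<union> tvars t"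
| "vars (Conj p q) = vars p \<union> vars q"
| "vars (Ex n p) = insert n (vars p)"
| "vars (All n p) = insert n (vars p)"

primrec atoms :: "'a fm \<Rightarrow> ('a tm \<times> 'a tm) set" where
  "atoms (Eq s t) = {(s, t)}"
| "atoms (Conj p q) = atoms p \<union> atoms q"
| "atoms (Ex n p) = atoms p"
| "atoms (All n p) = atoms p"

definition dep_edge :: "'a fm \<Rightarrow> nat \<Rightarrow> nat \<Rightarrow> bool" where
  "dep_edge p w z \<longleftrightarrow> w \<noteq> z \<and> (\<exists>(s, t) \<in> atoms p. w \<in> tvars s \<union> tvars t \<and> z \<in> tvars s \<union> tvars t)"

definition dep_connected :: "'a fm \<Rightarrow> bool" where
  "dep_connected p \<longleftrightarrow> (\<forall>w \<in> vars p. \<forall>z \<in> vars p. (dep_edge p)\<^sup>*\<^sup>* w z)"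

text \<open>The distinguished free variables x and y are Var 0 and Var 1.\<close>
definition cform :: "'a fm \<Rightarrow> bool" where
  "cform p \<longleftrightarrow> fvars p = {0, 1} \<and> dep_connected p"

definition holds2 :: "('a \<Rightarrow> 'a \<Rightarrow> 'a) \<Rightarrow> 'a fm \<Rightarrow> 'a \<Rightarrow> 'a \<Rightarrow> bool" where
  "holds2 f p a b \<longleftrightarrow> sat f ((\<lambda>_. a)(0 := a, 1 := b)) p"

definition up :: "('a \<Rightarrow> 'a \<Rightarrow> 'a) \<Rightarrow> 'a \<Rightarrow> 'a \<Rightarrow> 'a fm set" where
  "up f a b = {p. cform p \<and> holds2 f p a b}"

definition up2 :: "('a \<Rightarrow> 'a \<Rightarrow> 'a) \<Rightarrow> 'a \<Rightarrow> 'a \<Rightarrow> 'a \<Rightarrow> 'a \<Rightarrow> 'a fm set" where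
  "up2 f a b c d = up f a b \<inter> up f c d"

definition trivial_set :: "('a \<Rightarrow> 'a \<Rightarrow> 'a) \<Rightarrow> 'a fm set" where
  "trivial_set f = {p. cform p \<and> (\<forall>a b c d. p \<in> up2 f a b c d)}"

definition arrow_prop :: "('a \<Rightarrow> 'a \<Rightarrow> 'a) \<Rightarrow> 'a \<Rightarrow> 'a \<Rightarrow> 'a \<Rightarrow> 'a \<Rightarrow> bool" where
  "arrow_prop f a b c d \<longleftrightarrow>
     (up f a b \<union> up f c d \<subseteq> trivial_set f)
   \<or> (\<not> up2 f a b c d \<subseteq> trivial_set f \<and>
      (\<forall>d'. (trivial_set f \<subset> up2 f a b c d \<and> up2 f a b c d \<subseteq> up2 f a b c d')
            \<longrightarrow> (trivial_set f \<subset> up2 f a b c d' \<and> up2 f a b c d' \<subseteq> up2 f a b c d)))"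

definition analogy :: "('a \<Rightarrow> 'a \<Rightarrow> 'a) \<Rightarrow> 'a \<Rightarrow> 'a \<Rightarrow> 'a \<Rightarrow> 'a \<Rightarrow> bool" where
  "analogy f a b c d \<longleftrightarrow> arrow_prop f a b c d \<and> arrow_prop f b a d c
     \<and> arrow_prop f c d a b \<and> arrow_prop f d c b a"

end

theory Submission
  imports Defs
begin

lemma arrow_sum:
  fixes a b c d :: int
  assumes h: "a + b = c + d"
  shows "arrow_prop (+) a b c d"
proof -
  define \<phi> :: "int fm" where "\<phi> = Eq (App (Var 0) (Var 1)) (Par (a+b))"
  have hold: "holds2 (+) \<phi> x y \<longleftrightarrow> x + y = a + b" for x y
    by (simp add: holds2_def \<phi>_def)
  have e01: "dep_edge \<phi> 0 1" and e10: "dep_edge \<phi> 1 0"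
    by (auto simp: dep_edge_def \<phi>_def)
  have conn: "dep_connected \<phi>"
    unfolding dep_connected_def
  proof (intro ballI)
    fix w z assume "w \<in> vars \<phi>" "z \<in> vars \<phi>"
    hence "w \<in> {0,1}" "z \<in> {0,1}" by (auto simp: \<phi>_def)
    thus "(dep_edge \<phi>)\<^sup>*\<^sup>* w z" using e01 e10 by auto
  qed
  have cf: "cform \<phi>" using conn by (auto simp: cform_def \<phi>_def)
  have inup: "\<phi> \<in> up2 (+) x y u v \<longleftrightarrow> x + y = a + b \<and> u + v = a + b" for x y u v
    using cf hold by (simp add: up2_def up_def)
  have notriv: "\<phi> \<notin> trivial_set (+)"
    proof -
    have "\<phi> \<notin> up2 (+) (a+b+1) 0 0 0" using inup by simp
    thus ?thesis unfolding trivial_set_def by blast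
  qed
  have in1: "\<phi> \<in> up2 (+) a b c d" using inup h by simp
  show ?thesis
    unfolding arrow_prop_def
  proof (rule disjI2, rule conjI)
    show "\<not> up2 (+) a b c d \<subseteq> trivial_set (+)" using in1 notriv by blast
  next
    show "\<forall>d'. trivial_set (+) \<subset> up2 (+) a b c d \<and> up2 (+) a b c d \<subseteq> up2 (+) a b c d' \<longrightarrow> trivial_set (+) \<subset> up2 (+) a b c d' \<and> up2 (+) a b c d' \<subseteq> up2 (+) a b c d"
    proof (intro allI impI)
    fix d' assume A: "trivial_set (+) \<subset> up2 (+) a b c d \<and> up2 (+) a b c d \<subseteq> up2 (+) a b c d'"
    hence "\<phi> \<in> up2 (+) a b c d'" using in1 by blast
    hence "d' = d" using inup h by simp
    thus "trivial_set (+) \<subset> up2 (+) a b c d' \<and> up2 (+) a b c d' \<subseteq> up2 (+) a b c d"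
      using A by simp
    qed
  qed
qed

theorem corollary12:
  fixes a b c d :: int
  assumes "a + b = c + d"
  shows "analogy (+) a b c d"
  unfolding analogy_def
  using assms arrow_sum[of a b c d] arrow_sum[of b a d c] arrow_sum[of c d a b] arrow_sum[of d c b a]
  by (simp add: algebra_simps)

end
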